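(* Let $m\geq 1$ and let $f=a_0+a_1z+\cdots+a_mz^m\in\mathbb{Z}[z]$ be a primitive polynomial with $a_m\neq 0$ such that $a_0=\pm p^kd$ for some positive integers $k,d$ and a prime $p$ with $p\nmid d$, and such that every complex zero of $f$ lies outside the closed disk $\{z\in\mathbb{C}:|z|\leq d\}$. Suppose there is an index $j$ with $1\leq j\leq m$ such that $p\nmid a_j$. Then $f$ is a product of at most $\min\{k,j\}$ irreducible polynomials in $\mathbb{Z}[z]$. In particular, if $k=1$ or $j=1$, then $f$ is irreducible in $\mathbb{Z}[z]$.
   Context: A polynomial in $\mathbb{Z}[z]$ is primitive if the greatest common divisor of its coefficients is $1$. "$f$ is a product of at most $r$ irreducible polynomials" means that in a factorization of $f$ into irreducible elements of $\mathbb{Z}[z]$, the number of factors (counted with multiplicity) is at most $r$. *)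

theory Defs
  imports "HOL-Computational_Algebra.Computational_Algebra" Complex_Main
begin

definition prod_at_most_irreducibles :: "int poly \<Rightarrow> nat \<Rightarrow> bool" where
  "prod_at_most_irreducibles f r \<longleftrightarrow>
     (\<exists>fs :: int poly list. (\<forall>g\<in>set fs. irreducible g) \<and> prod_list fs = f \<and> length fs \<le> r)"

end

theory Submission
  imports Defs
begin

lemma map_of_int_mult:
  "map_poly (of_int::int\<Rightarrow>'a::comm_ring_1) (p*q) = map_poly of_int p * map_poly of_int q"
  by (rule poly_eqI) (simp add: coeff_map_poly coeff_mult of_int_sum)

lemma prod_gt:
  fixes r :: "nat \<Rightarrow> real"
  shows "(\<forall>i<n. r i > d) \<Longrightarrow> d \<ge> 1 \<Longrightarrow> n \<ge> 1 \<Longrightarrow> (\<Prod>i<n. r i) > d"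
proof (induction n)
  case 0
  then show ?case by simp
next
  case (Suc n)
  show ?case
  proof (cases "n = 0")
    case True
    then show ?thesis using Suc by simp
  next
    case False
    then have P: "(\<Prod>i<n. r i) > d" using Suc by auto
    have "r n > d" using Suc by auto
    then have "(\<Prod>i<n. r i) * r n \<ge> (\<Prod>i<n. r i) * 1"
      using P Suc.prems(2) by (intro mult_left_mono) auto
    then show ?thesis using P by simp
  qed
qed

lemma root_bound:
  fixes g :: "int poly" and d :: real
  assumes "degree g \<ge> 1" "d \<ge> 1"
    and roots: "\<forall>z::complex. poly (map_poly of_int g) z = 0 \<longrightarrow> cmod z > d"
  shows "\<bar>real_of_int (coeff g 0)\<bar> > d"
proof -
  define G where "G = map_poly (of_int::int\<Rightarrow>complex) g"
  have degG: "degree G = degree g" unfolding G_def by (simp add: degree_map_poly)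
  have lcG: "lead_coeff G = of_int (lead_coeff g)" unfolding G_def
    by (simp add: degree_map_poly coeff_map_poly)
  have g0: "g \<noteq> 0" using assms(1) by auto
  obtain root where R: "smult (lead_coeff G) (\<Prod>i<degree G. [:-root i, 1:]) = G"
    using complex_poly_decompose' by blast
  have rt: "cmod (root i) > d" if "i < degree G" for i
  proof -
    have "poly G (root i) = lead_coeff G * (\<Prod>j<degree G. poly [:-root j, 1:] (root i))"
      by (subst R[symmetric]) (simp add: poly_prod)
    also have "\<dots> = 0" using that by (auto intro!: bexI[of _ i])
    finally show ?thesis using roots unfolding G_def by auto
  qed
  have "coeff G 0 = poly G 0" by (simp add: poly_0_coeff_0)
  also have "\<dots> = lead_coeff G * (\<Prod>j<degree G. - root j)"
    by (subst R[symmetric]) (simp add: poly_prod)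
  finally have c0'': "coeff G 0 = lead_coeff G * (\<Prod>j<degree G. - root j)" .
  have c0': "cmod (coeff G 0) = \<bar>real_of_int (lead_coeff g)\<bar> * cmod (\<Prod>j<degree G. - root j)"
    unfolding c0'' lcG norm_mult norm_of_int ..
  have "cmod (\<Prod>j<degree G. - root j) = (\<Prod>j<degree G. cmod (- root j))"
    by (rule prod_norm[symmetric])
  then have c0: "cmod (coeff G 0) = \<bar>real_of_int (lead_coeff g)\<bar> * (\<Prod>j<degree G. cmod (root j))"
    using c0' by simp
  have "lead_coeff g \<noteq> 0" using g0 by simp
  then have lc1: "\<bar>real_of_int (lead_coeff g)\<bar> \<ge> 1" by linarith
  have P: "(\<Prod>j<degree G. cmod (root j)) > d"
    using rt assms(1,2) degG by (intro prod_gt) auto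
  have "\<bar>real_of_int (lead_coeff g)\<bar> * (\<Prod>j<degree G. cmod (root j)) \<ge> 1 * (\<Prod>j<degree G. cmod (root j))"
    using lc1 P assms(2) by (intro mult_right_mono) auto
  then have "cmod (coeff G 0) > d" using c0 P by simp
  moreover have "coeff G 0 = of_int (coeff g 0)" unfolding G_def by (simp add: coeff_map_poly)
  ultimately show ?thesis by (simp add: norm_of_int)
qed

lemma coeff_prod_dvd:
  "(\<forall>g\<in>set fs. (p::int) dvd coeff g 0) \<Longrightarrow> i < length fs \<Longrightarrow> p dvd coeff (prod_list fs) i"
proof (induction fs arbitrary: i)
  case Nil
  then show ?case by simp
next
  case (Cons g gs)
  have "coeff (prod_list (g # gs)) i = (\<Sum>a\<le>i. coeff g a * coeff (prod_list gs) (i - a))"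
    by (simp add: coeff_mult)
  also have "p dvd \<dots>"
  proof (rule dvd_sum)
    fix a assume "a \<in> {..i}"
    show "p dvd coeff g a * coeff (prod_list gs) (i - a)"
    proof (cases "a = 0")
      case True then show ?thesis using Cons.prems by simp
    next
      case False
      then have "i - a < length gs" using Cons.prems \<open>a \<in> {..i}\<close> by auto
      then show ?thesis using Cons by auto
    qed
  qed
  finally show ?case .
qed

lemma pow_dvd_prod_list:
  "(\<forall>x\<in>set xs. (p::int) dvd x) \<Longrightarrow> p ^ length xs dvd prod_list xs"
  by (induction xs) (auto intro: mult_dvd_mono)

lemma exists_irred_factorization:
  fixes x :: "int poly"
  assumes "x \<noteq> 0" "\<not> is_unit x"
  shows "\<exists>fs. (\<forall>g\<in>set fs. irreducible g) \<and> prod_list fs = x"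
proof -
  obtain xs where xs: "mset xs = prime_factorization x" using ex_mset by blast
  have pl0: "normalize (prod_list xs) = normalize x"
    using prod_mset_prime_factorization_weak[OF assms(1)] xs by (metis prod_mset_prod_list)
  define P where "P = prod_list xs"
  have P0: "P \<noteq> 0" using pl0 assms(1) unfolding P_def by auto
  define w where "w = unit_factor x * (1 div unit_factor P)"
  have wu: "is_unit w" unfolding w_def using assms(1) P0 by (simp add: unit_div)
  have wx: "w * P = x"
  proof -
    have "w * P = unit_factor x * ((1 div unit_factor P) * (unit_factor P * normalize P))"
      unfolding w_def by (simp add: mult.assoc)
    also have "(1 div unit_factor P) * (unit_factor P * normalize P) = normalize P"
    proof -
      have "(1 div unit_factor P) * unit_factor P = 1" using P0 by simp
      then show ?thesis by (metis mult.assoc mult_1)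
    qed
    also have "unit_factor x * normalize P = x" using pl0 unfolding P_def by simp
    finally show ?thesis .
  qed
  have irr: "irreducible y" if "y \<in> set xs" for y
  proof -
    have "y \<in># prime_factorization x" using that xs by (metis set_mset_mset)
    then have "prime y" by (rule in_prime_factors_imp_prime)
    then show ?thesis by (simp add: prime_elem_imp_irreducible)
  qed
  have "xs \<noteq> []"
  proof
    assume "xs = []"
    then have "normalize x = 1" using pl0 by simp
    then show False using assms(2) by (metis is_unit_normalize normalize_1_iff)
  qed
  then obtain y ys where yys: "xs = y # ys" by (cases xs) auto
  let ?fs = "(w * y) # ys"
  have "\<forall>g\<in>set ?fs. irreducible g"
    using irr yys irreducible_mult_unit_left[OF wu] by auto
  moreover have "prod_list ?fs = x"
    using wx yys unfolding P_def by (simp add: mult.assoc)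
  ultimately show ?thesis by blast
qed

theorem theorem2:
  fixes f :: "int poly" and p k d j :: nat
  assumes "degree f \<ge> 1"
    and "content f = 1"
    and "prime p" and "k \<ge> 1" and "d \<ge> 1" and "\<not> p dvd d"
    and "coeff f 0 = int (p ^ k * d) \<or> coeff f 0 = - int (p ^ k * d)"
    and "\<forall>z::complex. poly (map_poly of_int f) z = 0 \<longrightarrow> cmod z > real d"
    and "1 \<le> j" and "j \<le> degree f" and "\<not> int p dvd coeff f j"
  shows "prod_at_most_irreducibles f (min k j)
         \<and> ((k = 1 \<or> j = 1) \<longrightarrow> irreducible f)"
proof -
  have f0: "f \<noteq> 0" using assms(1) by auto
  have fnu: "\<not> is_unit f" using assms(1) by (auto simp: is_unit_poly_iff)
  obtain fs where fs: "\<forall>g\<in>set fs. irreducible g" "prod_list fs = f"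
    using exists_irred_factorization[OF f0 fnu] by blast
  have c0dvd: "coeff f 0 dvd int (p ^ k * d)" using assms(7) by auto
  have pdvd: "int p dvd coeff g 0" if g: "g \<in> set fs" for g
  proof -
    have gdvd: "g dvd f" using g fs(2) by (metis prod_list_dvd)
    then obtain h where h: "f = g * h" by (auto elim: dvdE)
    have "degree g \<ge> 1"
    proof (rule ccontr)
      assume "\<not> degree g \<ge> 1"
      then obtain c where c: "g = [:c:]" by (metis degree_eq_zeroE less_one not_less)
      then have "c dvd content f" using gdvd by (simp add: const_poly_dvd_iff_dvd_content)
      then have "is_unit g" using c assms(2) by (simp add: is_unit_poly_iff)
      then show False using fs(1) g by (auto simp: irreducible_def)
    qed
    moreover have "\<forall>z::complex. poly (map_poly of_int g) z = 0 \<longrightarrow> cmod z > real d"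
      using assms(8) h by (simp add: map_of_int_mult)
    ultimately have gt: "\<bar>real_of_int (coeff g 0)\<bar> > real d"
      using root_bound[of g "real d"] assms(5) by auto
    show ?thesis
    proof (rule ccontr)
      assume np: "\<not> int p dvd coeff g 0"
      have "coeff g 0 dvd coeff f 0" using h by (simp add: coeff_mult_0)
      then have cd0: "coeff g 0 dvd int (p ^ k * d)" using c0dvd by (rule dvd_trans)
      then have cd: "coeff g 0 dvd int (p ^ k) * int d" by (simp only: of_nat_mult)
      have "prime (int p)" using assms(3) by simp
      then have "coprime (int p) (coeff g 0)" using np by (simp add: prime_imp_coprime)
      then have "coprime (coeff g 0) (int p ^ k)" by (simp add: ac_simps)
      then have "coeff g 0 dvd int d" using cd by (simp add: coprime_dvd_mult_right_iff)
      then have "\<bar>coeff g 0\<bar> \<le> \<bar>int d\<bar>" using assms(5) by (intro dvd_imp_le_int) auto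
      then show False using gt by linarith
    qed
  qed
  have lk: "length fs \<le> k"
  proof (rule ccontr)
    assume "\<not> length fs \<le> k"
    then have "int p ^ Suc k dvd int p ^ length fs" by (intro le_imp_power_dvd) auto
    also have "int p ^ length fs dvd prod_list (map (\<lambda>g. coeff g 0) fs)"
      using pdvd pow_dvd_prod_list[of "map (\<lambda>g. coeff g 0) fs" "int p"] by auto
    also have "prod_list (map (\<lambda>g. coeff g 0) fs) = coeff f 0"
    proof -
      have "poly (prod_list fs) 0 = prod_list (map (\<lambda>g. poly g 0) fs)"
        using poly_prod_list[of fs 0] by simp
      then show ?thesis using fs(2) by (simp add: poly_0_coeff_0)
    qed
    also have "\<dots> dvd int (p ^ k * d)" by (rule c0dvd)
    finally have "p ^ k * p dvd p ^ k * d" by (simp add: of_nat_dvd_iff[symmetric] ac_simps)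
    then have "p dvd d" using assms(3) by (simp add: prime_gt_0_nat)
    then show False using assms(6) by simp
  qed
  have lj: "length fs \<le> j"
  proof (rule ccontr)
    assume "\<not> length fs \<le> j"
    then have "int p dvd coeff (prod_list fs) j" using pdvd by (intro coeff_prod_dvd) auto
    then show False using fs(2) assms(11) by simp
  qed
  have A: "prod_at_most_irreducibles f (min k j)"
    unfolding prod_at_most_irreducibles_def using fs lk lj by auto
  have B: "irreducible f" if "k = 1 \<or> j = 1"
  proof -
    have "length fs \<le> 1" using that lk lj by auto
    moreover have "fs \<noteq> []" using fs(2) fnu by auto
    ultimately obtain g where "fs = [g]" by (cases fs) auto
    then show ?thesis using fs by simp
  qed
  show ?thesis using A B by blast
qed

end
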